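(* For every $c_*\in(0,1/8]$ there exist constants $C,C'>0$ (depending only on $c_*$, $s$ and the $\lambda_i$) such that the following holds. Let $\varepsilon,\delta\in(0,1]$, $R\geq1$, frequencies $\mathbf{z}_1,\dots,\mathbf{z}_R$ with phases $\phi_1,\dots,\phi_R$, assume $N\geq(2/(\varepsilon\delta))^{CR^3}$, and let $(q,U,V,(r_n)_{n\in\mathbb{Z}},P,(Q_n)_{n\in\mathbb{Z}})$ be a linearization system with parameter $c_*$ for $(\varepsilon,\delta,\phi_1,\dots,\phi_R)$. For $h:\mathbb{Z}\to\mathbb{C}$ supported in $[N]$ define $\widetilde h:[N]\to\mathbb{C}$ by $$\widetilde h(n)=\frac{1}{|P|}\sum_{m\in P}\frac{1}{|Q_{n-m}|}\sum_{k\in Q_{n-m}}h(n+k).$$ If $\|h\|_\infty\leq\delta^{-1}$, then for all $i\in[R]$ $$\Big|\frac1N\sum_{n\in[N]}h(n)e(\phi_i(n))-\frac1N\sum_{n\in[N]}\widetilde h(n)e(\phi_i(n))\Big|\leq C'\varepsilon,$$ and $$\Big|\frac1N\sum_{n\in[N]}h(n)-\frac1N\sum_{n\in[N]}\widetilde h(n)\Big|\leq C'\varepsilon.$$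
   Context: $[N]=\{1,\dots,N\}$, $e(x)=e^{2\pi i x}$, $\|x\|$ is the distance from $x$ to the nearest integer. $M$ is a prime with $Y\leq M\leq 2Y$, $Y=2(|\lambda_1|+\dots+|\lambda_s|)N$, for fixed nonzero integers $\lambda_1,\dots,\lambda_s$. For $\mathbf{z}_i=(x_i,y_i)\in\mathbb{Z}_M\times\mathbb{Z}_{M^2}$, $\phi_i(n)=\frac{x_i}{M}n+\frac{y_i}{M^2}n^2$. A linearization system with parameter $c_*$ for $(\varepsilon,\delta,\phi_1,\dots,\phi_R)$ consists of integers $q\geq1$, $U,V\geq1$, $r_n\geq1$ ($n\in\mathbb{Z}$) with $N^{c_*/R^2}\leq U\leq 2N^{c_*/R^2}$, $U^{c_*/R}\leq V\leq 2U^{c_*/R}$, $q\leq N^{1/4}$, $r_n\leq U^{1/4}$, together with $P=\{q,2q,\dots,Uq\}$ and $Q_n=\{qr_n,2qr_n,\dots,Vqr_n\}$, such that $\|\phi_i(n+m+k)-\phi_i(n+m)\|\leq\varepsilon\delta$ for all $n\in[N]$, $m\in P$, $k\in Q_n$, $i\in[R]$. *)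

theory Defs
  imports "HOL-Analysis.Analysis" "HOL-Computational_Algebra.Primes"
begin

definition e2pi :: "real \<Rightarrow> complex" where
  "e2pi x = exp (2 * pi * \<i> * complex_of_real x)"

definition dist_nint :: "real \<Rightarrow> real" where
  "dist_nint x = \<bar>x - of_int (round x)\<bar>"

text \<open>phase phi(n) = x n / M + y n^2 / M^2, with x in Z_M, y in Z_{M^2}
  represented by integer representatives\<close>
definition phase :: "nat \<Rightarrow> int \<Rightarrow> int \<Rightarrow> int \<Rightarrow> real" where
  "phase M x y n = real_of_int x * real_of_int n / real M
                 + real_of_int y * (real_of_int n)^2 / (real M)^2"

definition Pset :: "int \<Rightarrow> int \<Rightarrow> int set" where
  "Pset q U = {q * j | j. 1 \<le> j \<and> j \<le> U}"

definition Qset :: "int \<Rightarrow> int \<Rightarrow> (int \<Rightarrow> int) \<Rightarrow> int \<Rightarrow> int set" where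
  "Qset q V r n = {q * r n * j | j. 1 \<le> j \<and> j \<le> V}"

definition lin_system ::
  "real \<Rightarrow> nat \<Rightarrow> nat \<Rightarrow> real \<Rightarrow> real \<Rightarrow> (nat \<Rightarrow> int \<Rightarrow> real)
   \<Rightarrow> int \<Rightarrow> int \<Rightarrow> int \<Rightarrow> (int \<Rightarrow> int) \<Rightarrow> bool" where
  "lin_system c N R \<epsilon> \<delta> \<phi> q U V r \<longleftrightarrow>
     q \<ge> 1 \<and> U \<ge> 1 \<and> V \<ge> 1 \<and> (\<forall>n. r n \<ge> 1) \<and>
     real N powr (c / (real R)^2) \<le> real_of_int U \<and>
     real_of_int U \<le> 2 * real N powr (c / (real R)^2) \<and>
     real_of_int U powr (c / real R) \<le> real_of_int V \<and>
     real_of_int V \<le> 2 * real_of_int U powr (c / real R) \<and>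
     real_of_int q \<le> real N powr (1/4) \<and>
     (\<forall>n. real_of_int (r n) \<le> real_of_int U powr (1/4)) \<and>
     (\<forall>n\<in>{1..int N}. \<forall>m\<in>Pset q U. \<forall>k\<in>Qset q V r n. \<forall>i\<in>{1..R}.
        dist_nint (\<phi> i (n + m + k) - \<phi> i (n + m)) \<le> \<epsilon> * \<delta>)"

definition htilde :: "int \<Rightarrow> int \<Rightarrow> int \<Rightarrow> (int \<Rightarrow> int) \<Rightarrow> (int \<Rightarrow> complex) \<Rightarrow> int \<Rightarrow> complex" where
  "htilde q U V r h n =
     (1 / of_nat (card (Pset q U))) *
     (\<Sum>m\<in>Pset q U. (1 / of_nat (card (Qset q V r (n - m)))) *
        (\<Sum>k\<in>Qset q V r (n - m). h (n + k)))"

end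

theory Submission
  imports Defs
begin


lemma e2pi_cis: "e2pi x = cis (2*pi*x)"
  by (simp add: e2pi_def cis_conv_exp mult_ac)

lemma cis_minus_one: "cmod (cis t - 1) \<le> \<bar>t\<bar>"
proof -
  have "(cmod (cis t - 1))^2 = (cos t - 1)^2 + (sin t)^2"
    by (simp add: cmod_def)
  also have "\<dots> = 2 - 2 * cos t" by (simp add: power2_eq_square algebra_simps)
  also have "\<dots> = 4 * (sin (t/2))^2" using cos_double_sin[of "t/2"] by simp
  also have "\<dots> \<le> t^2"
  proof -
    have "(sin(t/2))^2 \<le> (t/2)^2"
      by (metis abs_sin_x_le_abs_x power2_abs power_mono abs_ge_zero)
    thus ?thesis by (simp add: power_divide)
  qed
  finally have "(cmod (cis t - 1))^2 \<le> \<bar>t\<bar>^2" by simp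
  from power2_le_imp_le[OF this] show ?thesis by simp
qed

lemma e2pi_lip: "cmod (e2pi a - e2pi b) \<le> 2*pi*dist_nint (a-b)"
proof -
  define d where "d = a - b - of_int (round (a-b))"
  have ad: "2*pi*a = 2*pi*b + 2*pi*d + 2*pi*(of_int (round (a-b)))"
    unfolding d_def by (simp add: algebra_simps)
  have "cis (2*pi*a) = cis (2*pi*b) * cis (2*pi*d) * cis (2*pi*(of_int (round (a-b))))"
    unfolding ad cis_mult by simp
  hence ea: "e2pi a = e2pi b * cis (2*pi*d)" unfolding e2pi_cis by simp
  have "e2pi a - e2pi b = e2pi b * (cis (2*pi*d) - 1)" unfolding ea by (simp add: right_diff_distrib)
  hence "cmod (e2pi a - e2pi b) = cmod (cis (2*pi*d) - 1)" by (simp add: norm_mult e2pi_cis)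
  also have "\<dots> \<le> \<bar>2*pi*d\<bar>" by (rule cis_minus_one)
  also have "\<dots> = 2*pi*dist_nint (a-b)" by (simp add: dist_nint_def d_def abs_mult)
  finally show ?thesis .
qed


lemma sum_shift_int: "(\<Sum>n\<in>{a..b}. f n) = (\<Sum>t\<in>{a-c..b-c}. f (t + c))" for a b c :: int
  by (rule sum.reindex_bij_witness[of _ "\<lambda>t. t + c" "\<lambda>n. n - c"]) auto

lemma Pset_img: "q \<ge> 1 \<Longrightarrow> Pset q U = (\<lambda>j. q*j) ` {1..U}"
  unfolding Pset_def by auto

lemma sum_Pset: assumes "q \<ge> 1" shows "(\<Sum>m\<in>Pset q U. f m) = (\<Sum>a\<in>{1..U}. f (q*a))"
proof -
  have "inj_on (\<lambda>j. q*j) {1..U}" using assms by (auto simp: inj_on_def)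
  thus ?thesis unfolding Pset_img[OF assms] by (simp add: sum.reindex)
qed

lemma card_Pset: assumes "q \<ge> 1" shows "card (Pset q U) = nat U"
proof -
  have "inj_on (\<lambda>j. q*j) {1..U}" using assms by (auto simp: inj_on_def)
  thus ?thesis unfolding Pset_img[OF assms] by (simp add: card_image)
qed

lemma Qset_Pset: "Qset q V r n = Pset (q * r n) V"
  unfolding Qset_def Pset_def by simp

lemma htilde_eq:
  assumes "q \<ge> 1" "U \<ge> 1" "V \<ge> 1" "\<forall>n. r n \<ge> 1"
  shows "htilde q U V r g n = (1 / of_int (U*V)) *
     (\<Sum>a\<in>{1..U}. \<Sum>j\<in>{1..V}. g (n + q * r (n - q*a) * j))"
proof -
  have qr: "\<And>m. q * r m \<ge> 1" using assms mult_mono[of 1 q 1 "r _"] by auto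
  have cP: "of_nat (card (Pset q U)) = (of_int U :: complex)" using assms by (simp add: card_Pset)
  have cQ: "\<And>m. of_nat (card (Qset q V r m)) = (of_int V :: complex)"
    using assms qr by (simp add: Qset_Pset card_Pset)
  have sQ: "\<And>m. (\<Sum>k\<in>Qset q V r m. g (n + k)) = (\<Sum>j\<in>{1..V}. g (n + q * r m * j))"
    using qr by (simp add: Qset_Pset sum_Pset)
  have "htilde q U V r g n = (1 / of_int U) * (\<Sum>a\<in>{1..U}. (1 / of_int V) *
        (\<Sum>j\<in>{1..V}. g (n + q * r (n - q*a) * j)))"
    unfolding htilde_def cP cQ sQ using assms by (simp add: sum_Pset)
  also have "\<dots> = (1 / of_int (U*V)) * (\<Sum>a\<in>{1..U}. \<Sum>j\<in>{1..V}. g (n + q * r (n - q*a) * j))"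
    by (simp add: sum_divide_distrib[symmetric] divide_divide_eq_left)
  finally show ?thesis .
qed

lemma tele:
  fixes F :: "int \<Rightarrow> complex"
  assumes "0 \<le> U"
  shows "(\<Sum>a\<in>{1..U}. F (a+1)) - (\<Sum>a\<in>{1..U}. F a) = F (U+1) - F 1"
  using assms
proof (induction U rule: int_ge_induct)
  case base then show ?case by simp
next
  case (step i)
  have e: "{1..i+1} = insert (i+1) {1..i}" using step.hyps atLeastAtMostPlus1_int_conv[of 1 i] by (simp add: add.commute)
  show ?case unfolding e using step by (simp add: algebra_simps)
qed

lemma window:
  fixes G :: "int \<Rightarrow> complex"
  assumes B: "\<forall>x. cmod (G x) \<le> B" and U: "0 \<le> U"
  shows "cmod ((\<Sum>a\<in>{1..U}. G (a + int s)) - (\<Sum>a\<in>{1..U}. G a)) \<le> 2 * real s * B"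
proof (induction s)
  case 0 then show ?case by simp
next
  case (Suc s)
  have "(\<Sum>a\<in>{1..U}. G (a + int (Suc s))) - (\<Sum>a\<in>{1..U}. G (a + int s)) = G (U + 1 + int s) - G (1 + int s)"
    using tele[OF U, of "\<lambda>a. G (a + int s)"] by (simp add: algebra_simps)
  hence "cmod ((\<Sum>a\<in>{1..U}. G (a + int (Suc s))) - (\<Sum>a\<in>{1..U}. G (a + int s))) \<le> 2 * B"
    using B norm_triangle_ineq4[of "G (U + 1 + int s)" "G (1 + int s)"]
    by (smt (verit))
  hence "cmod ((\<Sum>a\<in>{1..U}. G (a + int (Suc s))) - (\<Sum>a\<in>{1..U}. G a)) \<le> 2*B + 2 * real s * B"
    using Suc.IH norm_triangle_ineq[of "(\<Sum>a\<in>{1..U}. G (a + int (Suc s))) - (\<Sum>a\<in>{1..U}. G (a + int s))"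
       "(\<Sum>a\<in>{1..U}. G (a + int s)) - (\<Sum>a\<in>{1..U}. G a)"]
    by simp
  thus ?case by (simp add: algebra_simps)
qed

lemma mean_lemma:
  fixes g :: "int \<Rightarrow> complex" and N :: nat
  assumes q: "q \<ge> 1" and U: "U \<ge> 1" and V: "V \<ge> 1" and r: "\<forall>n. r n \<ge> 1"
    and W: "\<forall>n. real_of_int (r n * V) \<le> W"
    and supp: "\<forall>n. n \<notin> {1..int N} \<longrightarrow> g n = 0" and B: "\<forall>n. cmod (g n) \<le> B"
  shows "cmod ((\<Sum>n\<in>{1..int N}. g n) - (\<Sum>n\<in>{1..int N}. htilde q U V r g n))
     \<le> real_of_int (q*U) * B + (real N + real_of_int (q*U)) * (2*W*B) / real_of_int U"
proof -
  define L where "L = q*U"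
  have L0: "L \<ge> 1" unfolding L_def using q U mult_mono[of 1 q 1 U] by auto
  define T where "T = {1-L..int N}"
  have B0: "B \<ge> 0" using B norm_ge_zero order_trans by blast
  define F where "F a j n = g (n + q * r (n - q*a) * j)" for a j n
  define c :: complex where "c = 1 / of_int (U*V)"
  have ht: "\<And>n. htilde q U V r g n = c * (\<Sum>a\<in>{1..U}. \<Sum>j\<in>{1..V}. F a j n)"
    unfolding c_def F_def using htilde_eq[OF q U V r] by blast
  have S1: "(\<Sum>n\<in>{1..int N}. htilde q U V r g n) = c * (\<Sum>a\<in>{1..U}. \<Sum>j\<in>{1..V}. \<Sum>n\<in>{1..int N}. F a j n)"
  proof -
    have "(\<Sum>n\<in>{1..int N}. htilde q U V r g n) = c * (\<Sum>n\<in>{1..int N}. \<Sum>a\<in>{1..U}. \<Sum>j\<in>{1..V}. F a j n)"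
      by (simp add: ht sum_distrib_left)
    also have "(\<Sum>n\<in>{1..int N}. \<Sum>a\<in>{1..U}. \<Sum>j\<in>{1..V}. F a j n) = (\<Sum>a\<in>{1..U}. \<Sum>n\<in>{1..int N}. \<Sum>j\<in>{1..V}. F a j n)"
      by (rule sum.swap)
    also have "\<dots> = (\<Sum>a\<in>{1..U}. \<Sum>j\<in>{1..V}. \<Sum>n\<in>{1..int N}. F a j n)"
      by (rule sum.cong[OF refl], rule sum.swap)
    finally show ?thesis .
  qed
  define D1 where "D1 a j = (\<Sum>n\<in>{1..int N}. F a j n) - (\<Sum>t\<in>T. g (t + q*a + q * r t * j))" for a j
  have D1b: "cmod (D1 a j) \<le> real_of_int L * B" if a: "a \<in> {1..U}" for a j
  proof -
    define A where "A = {1-q*a..int N-q*a}"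
    have qa: "1 \<le> q*a" "q*a \<le> L" using a q mult_mono[of 1 q 1 a] mult_left_mono[of a U q] by (auto simp: L_def)
    have AT: "A \<subseteq> T" unfolding A_def T_def using qa by auto
    have "(\<Sum>n\<in>{1..int N}. F a j n) = (\<Sum>t\<in>A. F a j (t + q*a))"
      unfolding A_def by (rule sum_shift_int)
    also have "\<dots> = (\<Sum>t\<in>A. g (t + q*a + q * r t * j))"
      unfolding F_def by simp
    finally have "D1 a j = - (\<Sum>t\<in>T - A. g (t + q*a + q * r t * j))"
      unfolding D1_def using sum.subset_diff[OF AT, of "\<lambda>t. g (t + q*a + q * r t * j)"]
      by (simp add: T_def)
    hence "cmod (D1 a j) \<le> (\<Sum>t\<in>T - A. cmod (g (t + q*a + q * r t * j)))"
      by (simp add: norm_sum)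
    also have "\<dots> \<le> (\<Sum>t\<in>T - A. B)" using B by (intro sum_mono) auto
    also have "\<dots> = real (card (T - A)) * B" by simp
    also have "card (T - A) = nat L"
    proof -
      have "card (T - A) = card T - card A" using AT by (simp add: card_Diff_subset T_def A_def finite_subset)
      also have "card T = nat (int N + L)" unfolding T_def by simp
      also have "card A = N" unfolding A_def by simp
      finally show ?thesis using L0 by simp
    qed
    finally show ?thesis using L0 by simp
  qed
  define D2 where "D2 j t = (\<Sum>a\<in>{1..U}. g (t + q*a + q * r t * j)) - (\<Sum>a\<in>{1..U}. g (t + q*a))" for j t
  have D2b: "cmod (D2 j t) \<le> 2*W*B" if j: "j \<in> {1..V}" for j t
  proof -
    define s where "s = nat (r t * j)"
    have rt: "r t \<ge> 1" using r by simp
    have rj: "r t * j \<ge> 0" using rt j by simp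
    have ints: "int s = r t * j" using rj by (simp add: s_def)
    have "D2 j t = (\<Sum>a\<in>{1..U}. (\<lambda>x. g (t + q*x)) (a + int s)) - (\<Sum>a\<in>{1..U}. (\<lambda>x. g (t + q*x)) a)"
      unfolding D2_def ints by (simp add: algebra_simps)
    also have "cmod \<dots> \<le> 2 * real s * B" by (rule window) (use B U in auto)
    also have "real s \<le> W"
    proof -
      have "r t * j \<le> r t * V" using j rt by (simp add: mult_left_mono)
      hence "real s \<le> real_of_int (r t * V)" using ints by (metis of_int_le_iff of_int_of_nat_eq)
      thus ?thesis using W by (meson order_trans)
    qed
    hence "2 * real s * B \<le> 2 * W * B" using B0 by (simp add: mult_right_mono)
    finally show ?thesis .
  qed
  have S3: "(\<Sum>t\<in>T. g (t + q*a)) = (\<Sum>n\<in>{1..int N}. g n)" if a: "a \<in> {1..U}" for a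
  proof -
    have qa: "1 \<le> q*a" "q*a \<le> L" using a q mult_mono[of 1 q 1 a] mult_left_mono[of a U q] by (auto simp: L_def)
    have "(\<Sum>n\<in>{1-L+q*a..int N+q*a}. g n) = (\<Sum>t\<in>T. g (t + q*a))"
      unfolding T_def using sum_shift_int[of g "1-L+q*a" "int N+q*a" "q*a"] by simp
    moreover have "(\<Sum>n\<in>{1-L+q*a..int N+q*a}. g n) = (\<Sum>n\<in>{1..int N}. g n)"
      by (rule sum.mono_neutral_right) (use qa supp in auto)
    ultimately show ?thesis by simp
  qed
  have main: "(\<Sum>a\<in>{1..U}. \<Sum>j\<in>{1..V}. \<Sum>n\<in>{1..int N}. F a j n)
     = of_int (U*V) * (\<Sum>n\<in>{1..int N}. g n) + (\<Sum>j\<in>{1..V}. \<Sum>t\<in>T. D2 j t) + (\<Sum>a\<in>{1..U}. \<Sum>j\<in>{1..V}. D1 a j)"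
  proof -
    have "(\<Sum>a\<in>{1..U}. \<Sum>j\<in>{1..V}. \<Sum>n\<in>{1..int N}. F a j n)
       = (\<Sum>a\<in>{1..U}. \<Sum>j\<in>{1..V}. \<Sum>t\<in>T. g (t + q*a + q * r t * j)) + (\<Sum>a\<in>{1..U}. \<Sum>j\<in>{1..V}. D1 a j)"
      unfolding D1_def by (simp add: sum.distrib[symmetric])
    also have "(\<Sum>a\<in>{1..U}. \<Sum>j\<in>{1..V}. \<Sum>t\<in>T. g (t + q*a + q * r t * j))
       = (\<Sum>j\<in>{1..V}. \<Sum>t\<in>T. \<Sum>a\<in>{1..U}. g (t + q*a + q * r t * j))"
    proof -
      have "(\<Sum>a\<in>{1..U}. \<Sum>j\<in>{1..V}. \<Sum>t\<in>T. g (t + q*a + q * r t * j))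
         = (\<Sum>j\<in>{1..V}. \<Sum>a\<in>{1..U}. \<Sum>t\<in>T. g (t + q*a + q * r t * j))" by (rule sum.swap)
      also have "\<dots> = (\<Sum>j\<in>{1..V}. \<Sum>t\<in>T. \<Sum>a\<in>{1..U}. g (t + q*a + q * r t * j))"
        by (rule sum.cong[OF refl], rule sum.swap)
      finally show ?thesis .
    qed
    also have "(\<Sum>j\<in>{1..V}. \<Sum>t\<in>T. \<Sum>a\<in>{1..U}. g (t + q*a + q * r t * j))
       = (\<Sum>j\<in>{1..V}. \<Sum>t\<in>T. \<Sum>a\<in>{1..U}. g (t + q*a)) + (\<Sum>j\<in>{1..V}. \<Sum>t\<in>T. D2 j t)"
      unfolding D2_def sum.distrib[symmetric] by (rule sum.cong[OF refl], rule sum.cong[OF refl]) simp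
    also have "(\<Sum>j\<in>{1..V}. \<Sum>t\<in>T. \<Sum>a\<in>{1..U}. g (t + q*a))
       = (\<Sum>j\<in>{1..V}. \<Sum>a\<in>{1..U}. \<Sum>t\<in>T. g (t + q*a))"
      by (rule sum.cong[OF refl], rule sum.swap)
    also have "\<dots> = (\<Sum>j\<in>{1..V}. \<Sum>a\<in>{1..U}. \<Sum>n\<in>{1..int N}. g n)"
      using S3 by simp
    also have "\<dots> = of_int (U*V) * (\<Sum>n\<in>{1..int N}. g n)"
      using U V by simp
    finally show ?thesis by (simp add: algebra_simps)
  qed
  have UV0: "(of_int (U*V) :: complex) \<noteq> 0" using U V by simp
  have diff: "(\<Sum>n\<in>{1..int N}. g n) - (\<Sum>n\<in>{1..int N}. htilde q U V r g n)
      = - c * ((\<Sum>j\<in>{1..V}. \<Sum>t\<in>T. D2 j t) + (\<Sum>a\<in>{1..U}. \<Sum>j\<in>{1..V}. D1 a j))"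
    unfolding S1 main c_def using UV0 by (simp add: field_simps)
  have n1: "cmod (\<Sum>a\<in>{1..U}. \<Sum>j\<in>{1..V}. D1 a j) \<le> real_of_int (U*V) * (real_of_int L * B)"
  proof -
    have "cmod (\<Sum>a\<in>{1..U}. \<Sum>j\<in>{1..V}. D1 a j) \<le> (\<Sum>a\<in>{1..U}. \<Sum>j\<in>{1..V}. cmod (D1 a j))"
      by (rule order_trans[OF norm_sum], rule sum_mono, rule norm_sum)
    also have "\<dots> \<le> (\<Sum>a\<in>{1..U}. \<Sum>j\<in>{1..V}. real_of_int L * B)"
      using D1b by (intro sum_mono) auto
    also have "\<dots> = real_of_int (U*V) * (real_of_int L * B)" using U V by simp
    finally show ?thesis .
  qed
  have n2: "cmod (\<Sum>j\<in>{1..V}. \<Sum>t\<in>T. D2 j t) \<le> real_of_int V * ((real N + real_of_int L) * (2*W*B))"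
  proof -
    have "cmod (\<Sum>j\<in>{1..V}. \<Sum>t\<in>T. D2 j t) \<le> (\<Sum>j\<in>{1..V}. \<Sum>t\<in>T. cmod (D2 j t))"
      by (rule order_trans[OF norm_sum], rule sum_mono, rule norm_sum)
    also have "\<dots> \<le> (\<Sum>j\<in>{1..V}. \<Sum>t\<in>T. 2*W*B)"
      using D2b by (intro sum_mono) auto
    also have "\<dots> = real_of_int V * ((real N + real_of_int L) * (2*W*B))"
    proof -
      have "real (card T) = real N + real_of_int L" unfolding T_def using L0 by simp
      thus ?thesis using V by simp
    qed
    finally show ?thesis .
  qed
  have "cmod (- c * ((\<Sum>j\<in>{1..V}. \<Sum>t\<in>T. D2 j t) + (\<Sum>a\<in>{1..U}. \<Sum>j\<in>{1..V}. D1 a j)))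
      \<le> (1 / real_of_int (U*V)) * (real_of_int V * ((real N + real_of_int L) * (2*W*B)) + real_of_int (U*V) * (real_of_int L * B))"
  proof -
    have cc: "cmod (- c) = 1 / real_of_int (U*V)" unfolding c_def using U V
      by (simp add: norm_divide norm_mult del: of_int_mult)
    show ?thesis unfolding norm_mult cc
      by (rule mult_left_mono) (use n1 n2 norm_triangle_ineq[of "\<Sum>j\<in>{1..V}. \<Sum>t\<in>T. D2 j t" "\<Sum>a\<in>{1..U}. \<Sum>j\<in>{1..V}. D1 a j"] U V in auto)
  qed
  also have "\<dots> = real_of_int L * B + (real N + real_of_int L) * (2*W*B) / real_of_int U"
    using U V by (simp add: field_simps)
  finally show ?thesis unfolding diff L_def .
qed

lemma phase_lemma:
  fixes h w :: "int \<Rightarrow> complex" and N :: nat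
  assumes q: "q \<ge> 1" and U: "U \<ge> 1" and V: "V \<ge> 1" and r: "\<forall>n. r n \<ge> 1"
    and hB: "\<forall>n. cmod (h n) \<le> B" and w1: "\<forall>n. cmod (w n) = 1" and eta0: "\<eta> \<ge> 0"
    and eta: "\<forall>n\<in>{1..int N}. \<forall>a\<in>{1..U}. \<forall>j\<in>{1..V}.
                cmod (w (n + q*a + q * r n * j) - w (n + q*a)) \<le> \<eta>"
  shows "cmod ((\<Sum>n\<in>{1..int N}. htilde q U V r (\<lambda>m. h m * w m) n) - (\<Sum>n\<in>{1..int N}. htilde q U V r h n * w n))
     \<le> real N * (\<eta> * B) + real_of_int (q*U) * (2*B)"
proof -
  define L where "L = q*U"
  have L0: "L \<ge> 1" unfolding L_def using q U mult_mono[of 1 q 1 U] by auto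
  have B0: "B \<ge> 0" using hB norm_ge_zero order_trans by blast
  define c :: complex where "c = 1 / of_int (U*V)"
  have cc: "cmod c = 1 / real_of_int (U*V)" unfolding c_def using U V
    by (simp add: norm_divide norm_mult del: of_int_mult)
  define bnd where "bnd n = B * (\<eta> + (if n \<le> L then 2 else 0))" for n
  have pt: "cmod (htilde q U V r (\<lambda>m. h m * w m) n - htilde q U V r h n * w n) \<le> bnd n"
    if n: "n \<in> {1..int N}" for n
  proof -
    define k where "k a j = q * r (n - q*a) * j" for a j
    have "htilde q U V r (\<lambda>m. h m * w m) n - htilde q U V r h n * w n
       = c * (\<Sum>a\<in>{1..U}. \<Sum>j\<in>{1..V}. h (n + k a j) * (w (n + k a j) - w n))"
    proof -
      have e1: "(\<Sum>a\<in>{1..U}. \<Sum>j\<in>{1..V}. h (n + k a j)) * w n = (\<Sum>a\<in>{1..U}. \<Sum>j\<in>{1..V}. h (n + k a j) * w n)"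
        by (simp add: sum_distrib_right)
      have e2: "(\<Sum>a\<in>{1..U}. \<Sum>j\<in>{1..V}. h (n + k a j) * w (n + k a j)) - (\<Sum>a\<in>{1..U}. \<Sum>j\<in>{1..V}. h (n + k a j) * w n)
         = (\<Sum>a\<in>{1..U}. \<Sum>j\<in>{1..V}. h (n + k a j) * (w (n + k a j) - w n))"
        by (simp add: sum_subtractf[symmetric] right_diff_distrib)
      have "htilde q U V r (\<lambda>m. h m * w m) n - htilde q U V r h n * w n
         = c * (\<Sum>a\<in>{1..U}. \<Sum>j\<in>{1..V}. h (n + k a j) * w (n + k a j)) - c * ((\<Sum>a\<in>{1..U}. \<Sum>j\<in>{1..V}. h (n + k a j)) * w n)"
        unfolding htilde_eq[OF q U V r] c_def k_def by (simp only: mult.assoc)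
      also have "\<dots> = c * ((\<Sum>a\<in>{1..U}. \<Sum>j\<in>{1..V}. h (n + k a j) * w (n + k a j)) - (\<Sum>a\<in>{1..U}. \<Sum>j\<in>{1..V}. h (n + k a j) * w n))"
        unfolding e1 by (simp only: right_diff_distrib)
      finally show ?thesis unfolding e2 .
    qed
    also have "cmod \<dots> \<le> cmod c * (\<Sum>a\<in>{1..U}. \<Sum>j\<in>{1..V}. bnd n)"
    proof -
      have tb: "cmod (h (n + k a j) * (w (n + k a j) - w n)) \<le> bnd n" if a: "a \<in> {1..U}" and j: "j \<in> {1..V}" for a j
      proof -
        have wd: "cmod (w (n + k a j) - w n) \<le> \<eta> + (if n \<le> L then 2 else 0)"
        proof (cases "n - q*a \<ge> 1")
          case True
          have qa: "1 \<le> q*a" using a q mult_mono[of 1 q 1 a] by auto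
          have "n - q*a \<in> {1..int N}" using True n qa by auto
          from eta[rule_format, OF this a j]
          have "cmod (w (n + k a j) - w n) \<le> \<eta>" unfolding k_def by simp
          then show ?thesis by simp
        next
          case False
          have "q*a \<le> L" using a q mult_left_mono[of a U q] by (auto simp: L_def)
          hence "n \<le> L" using False by simp
          moreover have "cmod (w (n + k a j) - w n) \<le> 2"
            using norm_triangle_ineq4[of "w (n + k a j)" "w n"] w1 by simp
          ultimately show ?thesis using eta0 by simp
        qed
        have "cmod (h (n + k a j) * (w (n + k a j) - w n)) = cmod (h (n + k a j)) * cmod (w (n + k a j) - w n)"
          by (simp add: norm_mult)
        also have "\<dots> \<le> B * (\<eta> + (if n \<le> L then 2 else 0))"
          by (rule mult_mono) (use hB wd B0 in auto)
        finally show ?thesis unfolding bnd_def .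
      qed
      have "cmod (\<Sum>a\<in>{1..U}. \<Sum>j\<in>{1..V}. h (n + k a j) * (w (n + k a j) - w n))
          \<le> (\<Sum>a\<in>{1..U}. \<Sum>j\<in>{1..V}. cmod (h (n + k a j) * (w (n + k a j) - w n)))"
        by (rule order_trans[OF norm_sum], rule sum_mono, rule norm_sum)
      also have "\<dots> \<le> (\<Sum>a\<in>{1..U}. \<Sum>j\<in>{1..V}. bnd n)"
        using tb by (intro sum_mono) auto
      finally show ?thesis unfolding norm_mult by (rule mult_left_mono) simp
    qed
    also have "\<dots> = bnd n" unfolding cc using U V by simp
    finally show ?thesis .
  qed
  have "cmod ((\<Sum>n\<in>{1..int N}. htilde q U V r (\<lambda>m. h m * w m) n) - (\<Sum>n\<in>{1..int N}. htilde q U V r h n * w n))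
      \<le> (\<Sum>n\<in>{1..int N}. cmod (htilde q U V r (\<lambda>m. h m * w m) n - htilde q U V r h n * w n))"
    unfolding sum_subtractf[symmetric] by (rule norm_sum)
  also have "\<dots> \<le> (\<Sum>n\<in>{1..int N}. bnd n)" using pt by (intro sum_mono) auto
  also have "\<dots> = real N * (\<eta> * B) + (\<Sum>n\<in>{1..int N}. if n \<le> L then 2*B else 0)"
  proof -
    have bn: "\<And>n. bnd n = \<eta>*B + (if n \<le> L then 2*B else 0)" unfolding bnd_def by (simp add: algebra_simps)
    show ?thesis by (simp only: bn sum.distrib) simp
  qed
  also have "(\<Sum>n\<in>{1..int N}. if n \<le> L then 2*B else 0) = real (card {n\<in>{1..int N}. n \<le> L}) * (2*B)"
    using sum.inter_filter[of "{1..int N}" "\<lambda>_. 2*B" "\<lambda>n. n \<le> L", symmetric] by simp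
  also have "real (card {n\<in>{1..int N}. n \<le> L}) \<le> real_of_int L"
  proof -
    have "card {n\<in>{1..int N}. n \<le> L} \<le> card {1..L}" by (rule card_mono) auto
    thus ?thesis using L0 by simp
  qed
  finally show ?thesis unfolding L_def using B0 by (simp add: mult_right_mono)
qed



lemma numerics:
  fixes c \<epsilon> \<delta> :: real and R N :: nat and q U V :: int
  assumes c: "0 < c" "c \<le> 1/8" and e: "0 < \<epsilon>" "\<epsilon> \<le> 1" and d: "0 < \<delta>" "\<delta> \<le> 1"
    and R: "R \<ge> 1"
    and hN: "real N \<ge> (2/(\<epsilon>*\<delta>)) powr ((2/c) * real R ^ 3)"
    and q: "q \<ge> 1" and U: "U \<ge> 1" and V: "V \<ge> 1"
    and U1: "real N powr (c / (real R)^2) \<le> real_of_int U"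
    and U2: "real_of_int U \<le> 2 * real N powr (c / (real R)^2)"
    and V2: "real_of_int V \<le> 2 * real_of_int U powr (c / real R)"
    and q2: "real_of_int q \<le> real N powr (1/4)"
  shows "real N \<ge> 1" "real_of_int (q*U) * (1/\<delta>) \<le> real N * \<epsilon>"
        "real_of_int U powr (1/4) * real_of_int V \<le> \<epsilon> * \<delta> * real_of_int U"
proof -
  define X where "X = 2/(\<epsilon>*\<delta>)"
  have ed: "0 < \<epsilon>*\<delta>" "\<epsilon>*\<delta> \<le> 1" using e d by (auto simp: mult_le_one)
  have X2: "X \<ge> 2" unfolding X_def using ed by (simp add: field_simps)
  define ex where "ex = (2/c) * real R ^ 3"
  have R1: "real R \<ge> 1" using R by simp
  have R3: "real R ^ 3 \<ge> 1" using R1 by simp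
  have c2: "2/c \<ge> 2" using c by (simp add: field_simps)
  have ex2: "ex \<ge> 2" unfolding ex_def using mult_mono[OF c2 R3] c by simp
  have NX: "real N \<ge> X powr ex" using hN unfolding X_def ex_def .
  have "X powr ex \<ge> X powr 2" by (rule powr_mono) (use ex2 X2 in auto)
  hence NX2: "real N \<ge> X^2" using NX X2 by (simp add: powr_numeral)
  thus N1: "real N \<ge> 1" using X2 by (smt (verit) one_le_power)
  have sN: "sqrt (real N) \<ge> X" using NX2 X2 real_sqrt_le_mono[OF NX2] by simp
  have "real N powr (c / (real R)^2) \<ge> (X powr ex) powr (c / (real R)^2)"
    by (rule powr_mono2) (use c NX X2 in auto)
  also have "(X powr ex) powr (c / (real R)^2) = X powr (2 * real R)"
    unfolding powr_powr ex_def using c R1 by (simp add: power3_eq_cube power2_eq_square field_simps)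
  also have "X powr (2 * real R) \<ge> X powr 2" by (rule powr_mono) (use R1 X2 in auto)
  finally have UX2: "real_of_int U \<ge> X^2" using U1 X2 by (simp add: powr_numeral)
  have sU: "sqrt (real_of_int U) \<ge> X" using UX2 X2 real_sqrt_le_mono[OF UX2] by simp
  have cR2: "c / (real R)^2 \<le> 1/8"
  proof -
    have "c / (real R)^2 \<le> c" using R1 c by (simp add: field_simps)
    thus ?thesis using c by linarith
  qed
  have cR: "c / real R \<le> 1/8"
  proof -
    have "c / real R \<le> c" using R1 c by (simp add: field_simps)
    thus ?thesis using c by linarith
  qed
  have "real_of_int U \<le> 2 * real N powr (1/8)"
    using U2 powr_mono[OF cR2, of "real N"] N1 by simp
  hence "real_of_int q * real_of_int U \<le> real N powr (1/4) * (2 * real N powr (1/8))"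
    by (rule mult_mono[OF q2]) (use q U in auto)
  also have "\<dots> = 2 * real N powr (3/8)" by (simp add: powr_add[symmetric])
  also have "\<dots> \<le> 2 * real N powr (1/2)" using powr_mono[of "3/8" "1/2" "real N"] N1 by simp
  also have "\<dots> = 2 * sqrt (real N)" by (simp add: powr_half_sqrt)
  finally have qU: "real_of_int (q*U) \<le> 2 * sqrt (real N)" by simp
  have sNN: "sqrt (real N) * X \<le> real N"
  proof -
    have "sqrt (real N) * X \<le> sqrt (real N) * sqrt (real N)" using sN by (intro mult_left_mono) auto
    thus ?thesis by simp
  qed
  hence "sqrt (real N) * X * \<epsilon> \<le> real N * \<epsilon>" using e by (intro mult_right_mono) auto
  hence "real N * \<epsilon> \<ge> 2 * sqrt (real N) / \<delta>" unfolding X_def using e d by (simp add: field_simps)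
  moreover have "real_of_int (q*U) * (1/\<delta>) \<le> 2 * sqrt (real N) * (1/\<delta>)"
    using qU d by (intro mult_right_mono) auto
  ultimately show "real_of_int (q*U) * (1/\<delta>) \<le> real N * \<epsilon>" by simp
  have "real_of_int U powr (1/4) * real_of_int V \<le> real_of_int U powr (1/4) * (2 * real_of_int U powr (1/8))"
    using V2 powr_mono[OF cR, of "real_of_int U"] U by (intro mult_left_mono) auto
  also have "\<dots> = 2 * real_of_int U powr (3/8)" by (simp add: powr_add[symmetric])
  also have "\<dots> \<le> 2 * real_of_int U powr (1/2)" using powr_mono[of "3/8" "1/2" "real_of_int U"] U by simp
  also have "\<dots> = 2 * sqrt (real_of_int U)" using U by (simp add: powr_half_sqrt)
  also have "\<dots> \<le> \<epsilon> * \<delta> * real_of_int U"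
  proof -
    have "sqrt (real_of_int U) * X \<le> sqrt (real_of_int U) * sqrt (real_of_int U)" using sU U by (intro mult_left_mono) auto
    also have "\<dots> = real_of_int U" using U by simp
    finally have "\<epsilon> * \<delta> * (sqrt (real_of_int U) * X) \<le> \<epsilon> * \<delta> * real_of_int U" using ed by (intro mult_left_mono) auto
    moreover have "\<epsilon> * \<delta> * (sqrt (real_of_int U) * X) = 2 * sqrt (real_of_int U)"
      unfolding X_def using ed e d by simp
    ultimately show ?thesis by simp
  qed
  finally show "real_of_int U powr (1/4) * real_of_int V \<le> \<epsilon> * \<delta> * real_of_int U" .
qed



lemma arith1:
  fixes \<delta> \<epsilon> L N W U :: real
  assumes "0<\<delta>" "0<\<epsilon>" "\<epsilon>*\<delta> \<le> 1" "0 \<le> L" "L*(1/\<delta>) \<le> N*\<epsilon>" "W \<le> \<epsilon>*\<delta>*U" "0<U" "0 \<le> N" "0 \<le> W"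
  shows "L*(1/\<delta>) + (N + L)*(2*W*(1/\<delta>))/U \<le> 5*(N*\<epsilon>)"
proof -
  have L1: "L \<le> N*\<epsilon>*\<delta>" using assms(1,5) by (simp add: field_simps)
  have "N*\<epsilon>*\<delta> \<le> N" using assms(3,8) by (simp add: mult_left_le mult.assoc)
  hence L2: "N + L \<le> 2*N" using L1 by simp
  have WU: "W/U \<le> \<epsilon>*\<delta>" using assms(6,7) by (simp add: field_simps)
  have "(N + L)*(2*W*(1/\<delta>))/U = 2*(N+L)*(W/U)/\<delta>" by (simp add: field_simps)
  also have "\<dots> \<le> 2*(2*N)*(\<epsilon>*\<delta>)/\<delta>"
    using L2 WU assms by (intro divide_right_mono mult_mono) auto
  also have "\<dots> = 4*(N*\<epsilon>)" using assms(1) by simp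
  finally show ?thesis using assms(5) by simp
qed

lemma fin:
  fixes A B :: complex
  assumes "N \<ge> 1" "cmod (A - B) \<le> K*(real N*\<epsilon>)"
  shows "cmod ((1/of_nat N)*A - (1/of_nat N)*B) \<le> K*\<epsilon>"
proof -
  have "(1/of_nat N)*A - (1/of_nat N)*B = (1/of_nat N)*(A - B)" by (simp only: right_diff_distrib)
  hence "cmod ((1/of_nat N)*A - (1/of_nat N)*B) = cmod (A-B) / real N" by (simp add: norm_mult norm_divide)
  also have "\<dots> \<le> K*(real N*\<epsilon>) / real N" using assms by (intro divide_right_mono) auto
  also have "\<dots> = K*\<epsilon>" using assms(1) by simp
  finally show ?thesis .
qed


theorem proposition9p4:
  fixes s :: nat and lam :: "nat \<Rightarrow> int" and c :: real
  assumes "\<forall>i\<in>{1..s}. lam i \<noteq> 0" and "0 < c" and "c \<le> 1/8"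
  shows "\<exists>C C'. C > 0 \<and> C' > 0 \<and>
    (\<forall>(\<epsilon>::real) (\<delta>::real) (R::nat) (N::nat) (M::nat) (x::nat \<Rightarrow> int) (y::nat \<Rightarrow> int)
       (q::int) (U::int) (V::int) (r::int \<Rightarrow> int) (h::int \<Rightarrow> complex).
       0 < \<epsilon> \<longrightarrow> \<epsilon> \<le> 1 \<longrightarrow> 0 < \<delta> \<longrightarrow> \<delta> \<le> 1 \<longrightarrow> R \<ge> 1 \<longrightarrow>
       prime M \<longrightarrow>
       2 * (\<Sum>i=1..s. \<bar>lam i\<bar>) * int N \<le> int M \<longrightarrow>
       int M \<le> 2 * (2 * (\<Sum>i=1..s. \<bar>lam i\<bar>) * int N) \<longrightarrow>
       (\<forall>i\<in>{1..R}. 0 \<le> x i \<and> x i < int M \<and> 0 \<le> y i \<and> y i < int M ^ 2) \<longrightarrow>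
       real N \<ge> (2 / (\<epsilon> * \<delta>)) powr (C * real R ^ 3) \<longrightarrow>
       lin_system c N R \<epsilon> \<delta> (\<lambda>i. phase M (x i) (y i)) q U V r \<longrightarrow>
       (\<forall>n. n \<notin> {1..int N} \<longrightarrow> h n = 0) \<longrightarrow>
       (\<forall>n. cmod (h n) \<le> 1 / \<delta>) \<longrightarrow>
       (\<forall>i\<in>{1..R}.
          cmod ((1 / of_nat N) * (\<Sum>n\<in>{1..int N}. h n * e2pi (phase M (x i) (y i) n))
              - (1 / of_nat N) * (\<Sum>n\<in>{1..int N}. htilde q U V r h n * e2pi (phase M (x i) (y i) n)))
          \<le> C' * \<epsilon>) \<and>
       cmod ((1 / of_nat N) * (\<Sum>n\<in>{1..int N}. h n)
           - (1 / of_nat N) * (\<Sum>n\<in>{1..int N}. htilde q U V r h n)) \<le> C' * \<epsilon>)"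
proof -
  have C0: "2/c > 0" using assms by simp
  have main: "\<forall>(\<epsilon>::real) (\<delta>::real) (R::nat) (N::nat) (M::nat) (x::nat \<Rightarrow> int) (y::nat \<Rightarrow> int)
       (q::int) (U::int) (V::int) (r::int \<Rightarrow> int) (h::int \<Rightarrow> complex).
       0 < \<epsilon> \<longrightarrow> \<epsilon> \<le> 1 \<longrightarrow> 0 < \<delta> \<longrightarrow> \<delta> \<le> 1 \<longrightarrow> R \<ge> 1 \<longrightarrow>
       prime M \<longrightarrow>
       2 * (\<Sum>i=1..s. \<bar>lam i\<bar>) * int N \<le> int M \<longrightarrow>
       int M \<le> 2 * (2 * (\<Sum>i=1..s. \<bar>lam i\<bar>) * int N) \<longrightarrow>
       (\<forall>i\<in>{1..R}. 0 \<le> x i \<and> x i < int M \<and> 0 \<le> y i \<and> y i < int M ^ 2) \<longrightarrow>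
       real N \<ge> (2 / (\<epsilon> * \<delta>)) powr ((2/c) * real R ^ 3) \<longrightarrow>
       lin_system c N R \<epsilon> \<delta> (\<lambda>i. phase M (x i) (y i)) q U V r \<longrightarrow>
       (\<forall>n. n \<notin> {1..int N} \<longrightarrow> h n = 0) \<longrightarrow>
       (\<forall>n. cmod (h n) \<le> 1 / \<delta>) \<longrightarrow>
       (\<forall>i\<in>{1..R}.
          cmod ((1 / of_nat N) * (\<Sum>n\<in>{1..int N}. h n * e2pi (phase M (x i) (y i) n))
              - (1 / of_nat N) * (\<Sum>n\<in>{1..int N}. htilde q U V r h n * e2pi (phase M (x i) (y i) n)))
          \<le> 16 * \<epsilon>) \<and>
       cmod ((1 / of_nat N) * (\<Sum>n\<in>{1..int N}. h n)
           - (1 / of_nat N) * (\<Sum>n\<in>{1..int N}. htilde q U V r h n)) \<le> 16 * \<epsilon>"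
  proof (intro allI impI)
    fix \<epsilon> \<delta> :: real and R N M :: nat and x y :: "nat \<Rightarrow> int" and q U V :: int
      and r :: "int \<Rightarrow> int" and h :: "int \<Rightarrow> complex"
    assume e0: "0 < \<epsilon>" and e1: "\<epsilon> \<le> 1" and d0: "0 < \<delta>" and d1: "\<delta> \<le> 1" and R1: "R \<ge> 1"
      and "prime M" and "2 * (\<Sum>i=1..s. \<bar>lam i\<bar>) * int N \<le> int M"
      and "int M \<le> 2 * (2 * (\<Sum>i=1..s. \<bar>lam i\<bar>) * int N)"
      and "\<forall>i\<in>{1..R}. 0 \<le> x i \<and> x i < int M \<and> 0 \<le> y i \<and> y i < int M ^ 2"
      and hN: "real N \<ge> (2 / (\<epsilon> * \<delta>)) powr ((2/c) * real R ^ 3)"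
      and lin: "lin_system c N R \<epsilon> \<delta> (\<lambda>i. phase M (x i) (y i)) q U V r"
      and supp: "\<forall>n. n \<notin> {1..int N} \<longrightarrow> h n = 0"
      and hB: "\<forall>n. cmod (h n) \<le> 1 / \<delta>"
    note L = lin[unfolded lin_system_def]
    have q1: "q \<ge> 1" and U1: "U \<ge> 1" and V1: "V \<ge> 1" and r1: "\<forall>n. r n \<ge> 1" using L by auto
    have Ulo: "real N powr (c / (real R)^2) \<le> real_of_int U"
      and Uhi: "real_of_int U \<le> 2 * real N powr (c / (real R)^2)"
      and Vhi: "real_of_int V \<le> 2 * real_of_int U powr (c / real R)"
      and qhi: "real_of_int q \<le> real N powr (1/4)"
      and rhi: "\<forall>n. real_of_int (r n) \<le> real_of_int U powr (1/4)"
      and cond: "\<forall>n\<in>{1..int N}. \<forall>m\<in>Pset q U. \<forall>k\<in>Qset q V r n. \<forall>i\<in>{1..R}.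
        dist_nint (phase M (x i) (y i) (n + m + k) - phase M (x i) (y i) (n + m)) \<le> \<epsilon> * \<delta>"
      using L by auto
    note nm = numerics[OF assms(2,3) e0 e1 d0 d1 R1 hN q1 U1 V1 Ulo Uhi Vhi qhi]
    have N1: "real N \<ge> 1" and qUb: "real_of_int (q*U) * (1/\<delta>) \<le> real N * \<epsilon>"
      and Wb: "real_of_int U powr (1/4) * real_of_int V \<le> \<epsilon> * \<delta> * real_of_int U" using nm by auto
    define W where "W = real_of_int U powr (1/4) * real_of_int V"
    have W0: "W \<ge> 0" unfolding W_def using V1 by simp
    have Wr: "\<forall>n. real_of_int (r n * V) \<le> W"
    proof
      fix n
      show "real_of_int (r n * V) \<le> W" unfolding W_def using rhi V1
        by (simp add: mult_right_mono)
    qed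
    have ed1: "\<epsilon>*\<delta> \<le> 1" using e0 e1 d0 d1 by (simp add: mult_le_one)
    have qU0: "0 \<le> real_of_int (q*U)" using q1 U1 by simp
    have meanb: "cmod ((\<Sum>n\<in>{1..int N}. g n) - (\<Sum>n\<in>{1..int N}. htilde q U V r g n)) \<le> 5*(real N*\<epsilon>)"
      if gs: "\<forall>n. n \<notin> {1..int N} \<longrightarrow> g n = 0" and gB: "\<forall>n. cmod (g n) \<le> 1/\<delta>" for g
    proof -
      have "cmod ((\<Sum>n\<in>{1..int N}. g n) - (\<Sum>n\<in>{1..int N}. htilde q U V r g n))
          \<le> real_of_int (q*U) * (1/\<delta>) + (real N + real_of_int (q*U)) * (2*W*(1/\<delta>)) / real_of_int U"
        by (rule mean_lemma[OF q1 U1 V1 r1 Wr gs gB])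
      also have "\<dots> \<le> 5*(real N*\<epsilon>)"
        by (rule arith1) (use d0 e0 ed1 qU0 qUb Wb U1 W0 in \<open>auto simp: W_def\<close>)
      finally show ?thesis .
    qed
    have part2: "cmod ((1 / of_nat N) * (\<Sum>n\<in>{1..int N}. h n)
           - (1 / of_nat N) * (\<Sum>n\<in>{1..int N}. htilde q U V r h n)) \<le> 16 * \<epsilon>"
    proof -
      have "cmod ((\<Sum>n\<in>{1..int N}. h n) - (\<Sum>n\<in>{1..int N}. htilde q U V r h n)) \<le> 16*(real N*\<epsilon>)"
      proof -
        have "0 \<le> real N * \<epsilon>" using e0 by simp
        thus ?thesis using meanb[OF supp hB] by linarith
      qed
      thus ?thesis by (rule fin[rotated]) (use N1 in simp)
    qed
    have part1: "cmod ((1 / of_nat N) * (\<Sum>n\<in>{1..int N}. h n * e2pi (phase M (x i) (y i) n))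
              - (1 / of_nat N) * (\<Sum>n\<in>{1..int N}. htilde q U V r h n * e2pi (phase M (x i) (y i) n)))
          \<le> 16 * \<epsilon>" if i: "i \<in> {1..R}" for i
    proof -
      define w where "w n = e2pi (phase M (x i) (y i) n)" for n
      define g where "g m = h m * w m" for m
      have w1: "\<forall>n. cmod (w n) = 1" unfolding w_def e2pi_cis by simp
      have gs: "\<forall>n. n \<notin> {1..int N} \<longrightarrow> g n = 0" unfolding g_def using supp by simp
      have gB: "\<forall>n. cmod (g n) \<le> 1/\<delta>" unfolding g_def using hB w1 by (simp add: norm_mult)
      have eta0: "2*pi*(\<epsilon>*\<delta>) \<ge> 0" using e0 d0 by simp
      have eta: "\<forall>n\<in>{1..int N}. \<forall>a\<in>{1..U}. \<forall>j\<in>{1..V}.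
                cmod (w (n + q*a + q * r n * j) - w (n + q*a)) \<le> 2*pi*(\<epsilon>*\<delta>)"
      proof (intro ballI)
        fix n a j assume n: "n \<in> {1..int N}" and a: "a \<in> {1..U}" and j: "j \<in> {1..V}"
        have m: "q*a \<in> Pset q U" unfolding Pset_def using a by auto
        have k: "q * r n * j \<in> Qset q V r n" unfolding Qset_def using j by auto
        have "dist_nint (phase M (x i) (y i) (n + q*a + q * r n * j) - phase M (x i) (y i) (n + q*a)) \<le> \<epsilon> * \<delta>"
          using cond n m k i by blast
        moreover have "cmod (w (n + q*a + q * r n * j) - w (n + q*a))
            \<le> 2*pi*dist_nint (phase M (x i) (y i) (n + q*a + q * r n * j) - phase M (x i) (y i) (n + q*a))"
          unfolding w_def by (rule e2pi_lip)
        ultimately show "cmod (w (n + q*a + q * r n * j) - w (n + q*a)) \<le> 2*pi*(\<epsilon>*\<delta>)"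
          by (smt (verit) pi_gt_zero mult_left_mono)
      qed
      have ph: "cmod ((\<Sum>n\<in>{1..int N}. htilde q U V r (\<lambda>m. h m * w m) n) - (\<Sum>n\<in>{1..int N}. htilde q U V r h n * w n))
          \<le> real N * (2*pi*(\<epsilon>*\<delta>) * (1/\<delta>)) + real_of_int (q*U) * (2*(1/\<delta>))"
        by (rule phase_lemma[OF q1 U1 V1 r1 hB w1 eta0 eta])
      have ph2: "real N * (2*pi*(\<epsilon>*\<delta>) * (1/\<delta>)) + real_of_int (q*U) * (2*(1/\<delta>)) \<le> 2*pi*(real N*\<epsilon>) + 2*(real N*\<epsilon>)"
        using qUb d0 by (simp add: field_simps)
      have gg: "(\<lambda>m. h m * w m) = g" unfolding g_def by simp
      have mg: "cmod ((\<Sum>n\<in>{1..int N}. g n) - (\<Sum>n\<in>{1..int N}. htilde q U V r g n)) \<le> 5*(real N*\<epsilon>)"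
        by (rule meanb[OF gs gB])
      have "cmod ((\<Sum>n\<in>{1..int N}. g n) - (\<Sum>n\<in>{1..int N}. htilde q U V r h n * w n))
          \<le> cmod ((\<Sum>n\<in>{1..int N}. g n) - (\<Sum>n\<in>{1..int N}. htilde q U V r g n))
           + cmod ((\<Sum>n\<in>{1..int N}. htilde q U V r g n) - (\<Sum>n\<in>{1..int N}. htilde q U V r h n * w n))"
        by (rule norm_diff_triangle_le[OF order_refl order_refl])
      also have "\<dots> \<le> 5*(real N*\<epsilon>) + (2*pi*(real N*\<epsilon>) + 2*(real N*\<epsilon>))"
        using mg ph ph2 unfolding gg by linarith
      also have "\<dots> \<le> 16*(real N*\<epsilon>)"
      proof -
        have a0: "0 \<le> real N * \<epsilon>" using e0 by simp
        have "2*pi*(real N*\<epsilon>) \<le> 8*(real N*\<epsilon>)" using pi_less_4 a0 by (intro mult_right_mono) auto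
        thus ?thesis using a0 by linarith
      qed
      finally have "cmod ((\<Sum>n\<in>{1..int N}. g n) - (\<Sum>n\<in>{1..int N}. htilde q U V r h n * w n)) \<le> 16*(real N*\<epsilon>)" .
      hence "cmod ((1 / of_nat N) * (\<Sum>n\<in>{1..int N}. g n) - (1 / of_nat N) * (\<Sum>n\<in>{1..int N}. htilde q U V r h n * w n)) \<le> 16*\<epsilon>"
        by (rule fin[rotated]) (use N1 in simp)
      thus ?thesis unfolding g_def w_def .
    qed
    show "(\<forall>i\<in>{1..R}.
          cmod ((1 / of_nat N) * (\<Sum>n\<in>{1..int N}. h n * e2pi (phase M (x i) (y i) n))
              - (1 / of_nat N) * (\<Sum>n\<in>{1..int N}. htilde q U V r h n * e2pi (phase M (x i) (y i) n)))
          \<le> 16 * \<epsilon>) \<and>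
       cmod ((1 / of_nat N) * (\<Sum>n\<in>{1..int N}. h n)
           - (1 / of_nat N) * (\<Sum>n\<in>{1..int N}. htilde q U V r h n)) \<le> 16 * \<epsilon>"
      using part1 part2 by blast
  qed
  show ?thesis
    apply (rule exI[of _ "2/c"], rule exI[of _ "16::real"])
    apply (rule conjI[OF C0])
    apply (rule conjI)
     apply simp
    apply (rule main)
    done
qed

end
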